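(* Let $T(n)=(3n+1)/2^{v_2(3n+1)}$ be the Syracuse map. For odd $n$ let $L=L(n)=v_2(n+1)-1$, $r=r(n)=v_2(3T^{L}(n)+1)$, and $X(n)=(L+1)\log_2 3-(L+r)$. Consider the distribution of $X$ under natural density on odd starts (the probability law assigning to each value $x$ the natural density, among odd positive integers, of $\{n: X(n)=x\}$). Then: (1) its moment generating function is $$M_X(t)=\mathbb E[e^{tX}]=\frac{e^{t(\log_2 3-2)}}{4\bigl(1-\tfrac12 e^{t(\log_2 3-1)}\bigr)\bigl(1-\tfrac12 e^{-t}\bigr)}$$ for $-\ln 2<t<\ln 2/(\log_2 3-1)$; (2) $\mathbb E[X]=2\log_2 3-4\approx-0.8301$ and $\mathrm{Var}(X)=2\bigl((\log_2 3-1)^2+1\bigr)\approx 2.684$.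
   Context: $v_2$ is the $2$-adic valuation; $T^j$ the $j$-th iterate; $\ln$ is the natural logarithm. *)

theory Defs
  imports "HOL-Analysis.Analysis" "HOL-Computational_Algebra.Primes"
begin

definition v2 :: "nat \<Rightarrow> nat" where
  "v2 m = multiplicity (2::nat) m"

definition syr :: "nat \<Rightarrow> nat" where
  "syr n = (3 * n + 1) div 2 ^ v2 (3 * n + 1)"

definition Lc :: "nat \<Rightarrow> nat" where
  "Lc n = v2 (n + 1) - 1"

definition rc :: "nat \<Rightarrow> nat" where
  "rc n = v2 (3 * (syr ^^ Lc n) n + 1)"

definition Xc :: "nat \<Rightarrow> real" where
  "Xc n = real (Lc n + 1) * log 2 3 - real (Lc n + rc n)"

definition odd_ratio :: "(nat \<Rightarrow> bool) \<Rightarrow> nat \<Rightarrow> real" where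
  "odd_ratio P N = real (card {n. n < N \<and> odd n \<and> P n}) / real (card {n. n < N \<and> odd n})"

text \<open>Natural density among odd positive integers (meaningful when the limit exists).\<close>
definition odd_density :: "(nat \<Rightarrow> bool) \<Rightarrow> real" where
  "odd_density P = lim (odd_ratio P)"

end

theory Submission
  imports Defs "HOL-Number_Theory.Cong" "HOL-Real_Asymp.Real_Asymp"
begin

lemma v2_eqI: "2^k dvd x \<Longrightarrow> \<not> 2^(Suc k) dvd x \<Longrightarrow> v2 x = k"
  unfolding v2_def by (rule multiplicity_eqI)

lemma v2_dvd: "2 ^ v2 x dvd x"
  unfolding v2_def by (rule multiplicity_dvd)

lemma v2_not_dvd: "x > 0 \<Longrightarrow> \<not> 2 ^ Suc (v2 x) dvd x"
  unfolding v2_def by (metis Suc_n_not_le_n gr_implies_not0 is_unit_power_iff multiplicity_geI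
      nat_dvd_1_iff_1 numeral_eq_one_iff semiring_norm(85) zero_neq_numeral)

lemma v2_mod_iff:
  assumes "x > 0"
  shows "v2 x = k \<longleftrightarrow> x mod 2^Suc k = 2^k"
proof
  assume "v2 x = k"
  then have d: "2^k dvd x" and nd: "\<not> 2^Suc k dvd x" using v2_dvd v2_not_dvd assms by blast+
  obtain m where m: "x = 2^k * m" using d by blast
  with nd have "odd m" by auto
  then obtain q where "m = 2*q+1" by (meson oddE)
  then have "x = 2^Suc k * q + 2^k" using m by (simp add: algebra_simps)
  then show "x mod 2^Suc k = 2^k" by simp
next
  assume h: "x mod 2^Suc k = 2^k"
  have x: "x = 2^Suc k * (x div 2^Suc k) + 2^k" using h by (metis div_mult_mod_eq mult.commute)
  show "v2 x = k"
  proof (rule v2_eqI)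
    show "2^k dvd x" by (subst x) simp
    show "\<not> 2^Suc k dvd x" using h by (simp add: dvd_eq_mod_eq_0)
  qed
qed

lemma v2_mult_pow: "x > 0 \<Longrightarrow> v2 (2^k * x) = k + v2 x"
  unfolding v2_def
  by (simp add: prime_elem_multiplicity_mult_distrib)

lemma v2_mult_odd: "odd y \<Longrightarrow> x > 0 \<Longrightarrow> v2 (y * x) = v2 x"
proof -
  assume "odd y" "x > 0"
  then have "y \<noteq> 0" by (metis dvd_0_right)
  moreover have "multiplicity 2 y = 0" using \<open>odd y\<close> by (simp add: not_dvd_imp_multiplicity_0)
  ultimately show ?thesis unfolding v2_def using \<open>x > 0\<close>
    by (simp add: prime_elem_multiplicity_mult_distrib odd_pos)
qed

lemma syr_iter:
  assumes "odd n" "i < v2 (n+1)"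
  shows "2^i * ((syr ^^ i) n + 1) = 3^i * (n+1)"
  using assms(2)
proof (induction i)
  case 0 then show ?case by simp
next
  case (Suc i)
  define y where "y = (syr ^^ i) n"
  have IH: "2^i * (y + 1) = 3^i * (n+1)" using Suc y_def by simp
  have "2^(i+2) dvd n+1"
  proof -
    have "i+2 \<le> v2 (n+1)" using Suc.prems by simp
    then show ?thesis by (rule dvd_trans[OF le_imp_power_dvd v2_dvd])
  qed
  then have "2^(i+2) dvd 2^i * (y+1)" using IH by (metis dvd_mult2 mult.commute)
  then have "2^i * 4 dvd 2^i * (y + 1)" by (simp add: power_add mult.commute)
  then have "4 dvd y + 1" using dvd_times_left_cancel_iff[of "2^i::nat" 4 "y+1"] by simp
  then obtain q where q: "y + 1 = 4*q" by blast
  then have q0: "q > 0" by (cases q) auto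
  have e1: "3*y+1 = 2 * (6*(q - 1) + 5)" using q q0 by (cases q) auto
  have v: "v2 (3*y+1) = 1"
  proof (rule v2_eqI)
    show "2^1 dvd 3*y+1" unfolding e1 by simp
    show "\<not> 2^Suc 1 dvd 3*y+1" unfolding e1 by simp presburger
  qed
  have sy: "syr y = 6*(q - 1) + 5" unfolding syr_def v unfolding e1 by simp
  have "2^Suc i * ((syr ^^ Suc i) n + 1) = 2 * 2^i * (6 * q)" using sy q0 y_def by simp
  also have "\<dots> = 3 * (2^i * (y+1))" using q by simp
  also have "\<dots> = 3^Suc i * (n+1)" using IH by simp
  finally show ?case .
qed

definition Jf :: "nat \<Rightarrow> nat" where "Jf n = v2 (n+1)"
definition Ef :: "nat \<Rightarrow> nat" where "Ef n = v2 (3^(Jf n) * (n+1) - 2^(Jf n))"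

lemma v2_even_pos: "even z \<Longrightarrow> z > 0 \<Longrightarrow> v2 z \<ge> 1"
  using v2_not_dvd[of z] by (metis One_nat_def less_one not_less power_0 power_one_right)

lemma Xc_eq:
  assumes "odd n"
  shows "Xc n = real (Jf n) * log 2 3 - real (Ef n) \<and> 1 \<le> Jf n \<and> Jf n < Ef n"
proof -
  define j where "j = Jf n"
  have j1: "j \<ge> 1" unfolding j_def Jf_def using assms by (intro v2_even_pos) auto
  obtain m where m: "n+1 = 2^j * m" and om: "odd m"
    using multiplicity_decompose'[of "n+1" 2] unfolding j_def Jf_def v2_def by auto
  have m0: "m > 0" using om by (simp add: odd_pos)
  define L where "L = j - 1"
  have jL: "j = Suc L" using j1 L_def by simp
  have LL: "Lc n = L" unfolding Lc_def L_def j_def Jf_def by simp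
  define y where "y = (syr ^^ L) n"
  have "2^L * (y+1) = 3^L * (n+1)" unfolding y_def using syr_iter[OF assms, of L] jL j_def Jf_def by simp
  also have "\<dots> = 2^L * (3^L * 2 * m)" using m jL by simp
  finally have y1: "y + 1 = 3^L * 2 * m" by (metis mult_left_cancel power_not_zero zero_neq_numeral)
  define z where "z = 3^j * m - 1"
  have "(3::nat)^1 \<le> 3^j" by (rule power_increasing) (use j1 in auto)
  moreover have "3^j * 1 \<le> 3^j * m" using m0 by (intro mult_le_mono2) simp
  ultimately have z3: "3^j * m \<ge> 3" by (metis le_trans mult.right_neutral power_one_right)
  have z0: "z > 0" using z3 unfolding z_def by simp
  have ez: "even z" unfolding z_def using om z3 by simp
  have e3: "3*y+1 = 2^1 * z" unfolding z_def using y1 jL z3 by (simp add: algebra_simps)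
  have rc: "rc n = 1 + v2 z" unfolding rc_def LL y_def[symmetric] e3 using v2_mult_pow[OF z0, of 1] by simp
  have ew: "3^j * (n+1) - 2^j = 2^j * z" unfolding z_def m by (simp add: algebra_simps diff_mult_distrib2)
  have Ef: "Ef n = j + v2 z" unfolding Ef_def j_def[symmetric] ew using v2_mult_pow[OF z0] by simp
  have "Xc n = real (Suc L) * log 2 3 - real (L + (1 + v2 z))" unfolding Xc_def LL rc by simp
  then have "Xc n = real j * log 2 3 - real (Ef n)" unfolding Ef jL by simp
  moreover have "j < Ef n" unfolding Ef using v2_even_pos[OF ez z0] by simp
  ultimately show ?thesis using j1 j_def by simp
qed

lemma v2_zero: "v2 0 = 0" unfolding v2_def by simp

lemma class_iff:
  assumes "1 \<le> j" "j < e"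
  shows "(v2 (n+1) = j \<and> v2 (3^j*(n+1) - 2^j) = e) \<longleftrightarrow> (3^j*(n+1)) mod 2^Suc e = 2^j + 2^e"
proof -
  define X where "X = 3^j*(n+1)"
  have lt: "2^j + 2^e < (2::nat)^Suc e" using assms by simp
  show ?thesis unfolding X_def[symmetric]
  proof
    assume h: "v2 (n+1) = j \<and> v2 (X - 2^j) = e"
    then have "X - 2^j \<noteq> 0" using assms v2_zero by auto
    then have w0: "X - 2^j > 0" by simp
    then have "(X - 2^j) mod 2^Suc e = 2^e" using h v2_mod_iff by blast
    then have "(X - 2^j + 2^j) mod 2^Suc e = (2^e + 2^j) mod 2^Suc e" by (metis mod_add_left_eq)
    then show "X mod 2^Suc e = 2^j + 2^e" using w0 lt by simp
  next
    assume h: "X mod 2^Suc e = 2^j + 2^e"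
    define q where "q = X div 2^Suc e"
    have X: "X = 2^Suc e * q + 2^j + 2^e" using h q_def by (metis add.assoc div_mult_mod_eq mult.commute)
    have w: "X - 2^j = 2^Suc e * q + 2^e" using X by simp
    have "v2 (X - 2^j) = e" unfolding w by (subst v2_mod_iff) auto
    moreover have "v2 X = j"
    proof (subst v2_mod_iff)
      show "X > 0" using X by simp
      have e: "e = Suc j + (e - Suc j)" using assms by simp
      have "X = 2^Suc j * (2^Suc (e - Suc j) * q + 2^(e - Suc j)) + 2^j" unfolding X
        by (subst (1 2) e) (simp add: power_add algebra_simps)
      then show "X mod 2^Suc j = 2^j" by simp
    qed
    moreover have "v2 X = v2 (n+1)" unfolding X_def by (rule v2_mult_odd) auto
    ultimately show "v2 (n+1) = j \<and> v2 (X - 2^j) = e" by simp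
  qed
qed

lemma class_exists:
  assumes "1 \<le> j" "j < e"
  shows "\<exists>n::nat. (3^j*(n+1)) mod 2^Suc e = 2^j + 2^e"
proof -
  define M :: nat where "M = 2^Suc e"
  have "coprime ((3::nat)^j) M" unfolding M_def by simp
  then obtain x where x: "[3^j * x = Suc 0] (mod M)" using cong_solve_coprime_nat by blast
  have M2: "M \<ge> 2" unfolding M_def by (metis one_le_numeral one_le_power power_Suc mult_le_mono2 mult.right_neutral)
  have "x \<noteq> 0"
  proof
    assume "x = 0"
    then have "[0 = Suc 0] (mod M)" using x by simp
    then show False using M2 by (simp add: cong_def)
  qed
  define n where "n = x * (2^j + 2^e) - 1"
  have n1: "n + 1 = x * (2^j + 2^e)" unfolding n_def using \<open>x \<noteq> 0\<close> by simp
  have "[3^j * x * (2^j + 2^e) = Suc 0 * (2^j + 2^e)] (mod M)" by (rule cong_mult[OF x cong_refl])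
  then have "(3^j*(n+1)) mod M = (2^j + 2^e) mod M" unfolding n1 cong_def by (simp add: mult.assoc)
  also have "\<dots> = 2^j + 2^e" unfolding M_def using assms by simp
  finally show ?thesis unfolding M_def by blast
qed

lemma class_residue:
  fixes c n :: nat
  assumes "(3^j*(c+1)) mod 2^Suc e = 2^j + 2^e"
  shows "(3^j*(n+1)) mod 2^Suc e = 2^j + 2^e \<longleftrightarrow> n mod 2^Suc e = c mod 2^Suc e"
proof -
  have "(3^j*(n+1)) mod 2^Suc e = 2^j + 2^e \<longleftrightarrow> [3^j*(n+1) = 3^j*(c+1)] (mod 2^Suc e)"
    using assms by (simp add: cong_def)
  also have "\<dots> \<longleftrightarrow> [n+1 = c+1] (mod 2^Suc e)" by (rule cong_mult_lcancel_nat) simp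
  also have "\<dots> \<longleftrightarrow> [n = c] (mod 2^Suc e)" by (rule cong_add_rcancel_nat)
  finally show ?thesis by (simp add: cong_def)
qed

lemma log23_irr:
  assumes "real d * log 2 3 = real f"
  shows "d = 0"
proof (rule ccontr)
  assume "d \<noteq> 0"
  have "(2::real) powr (real d * log 2 3) = (2 powr log 2 3) powr real d"
    unfolding powr_powr by (simp only: mult.commute)
  also have "\<dots> = 3 ^ d" by (simp add: powr_realpow)
  finally have "(3::real)^d = 2 powr real f" using assms by simp
  also have "\<dots> = 2 ^ f" by (simp add: powr_realpow)
  finally have "(3::real)^d = 2^f" .
  then have e: "(3::nat)^d = 2^f" by (metis of_nat_eq_iff of_nat_numeral of_nat_power)
  show False
  proof (cases f)
    case 0 then show ?thesis using e \<open>d \<noteq> 0\<close> by simp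
  next
    case (Suc f') then have "even ((3::nat)^d)" using e by simp
    then show ?thesis by simp
  qed
qed

lemma g_inj:
  assumes "real j * log 2 3 - real e = real j' * log 2 3 - real e'"
  shows "j = j' \<and> e = e'"
proof -
  have a1: "log 2 3 > (0::real)" by simp
  have key: "j = j' \<and> e = e'" if h: "real j * log 2 3 - real e = real j' * log 2 3 - real e'" and "j' \<le> j"
    for j e j' e' :: nat
  proof -
    have "real (j - j') * log 2 3 = real e - real e'" using h that(2) by (simp add: of_nat_diff algebra_simps)
    moreover have "real (j - j') * log 2 3 \<ge> 0" using a1 by simp
    ultimately have "e' \<le> e" by simp
    then have "real (j - j') * log 2 3 = real (e - e')" using \<open>real (j - j') * log 2 3 = real e - real e'\<close>
      by (simp add: of_nat_diff)
    then have "j - j' = 0" by (rule log23_irr)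
    then have "j = j'" using that(2) by simp
    then show ?thesis using h by simp
  qed
  show ?thesis
  proof (cases "j' \<le> j")
    case True then show ?thesis using key[OF assms] by simp
  next
    case False then show ?thesis using key[OF assms[symmetric]] by simp
  qed
qed

lemma count_class:
  assumes "0 < M" "c < M"
  shows "\<bar>real (card {n. n<N \<and> n mod M = c}) - real N / real M\<bar> \<le> 1"
proof -
  define S where "S = {n. n<N \<and> n mod M = c}"
  have up: "card S \<le> N div M + 1"
  proof -
    have "inj_on (\<lambda>n. n div M) S" unfolding S_def inj_on_def
      by (metis (mono_tags, lifting) div_mult_mod_eq mem_Collect_eq)
    moreover have "(\<lambda>n. n div M) ` S \<subseteq> {..N div M}" unfolding S_def by (auto intro: div_le_mono)
    ultimately have "card S \<le> card {..N div M}" by (meson card_inj_on_le finite_atMost)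
    then show ?thesis by simp
  qed
  have lo: "N div M \<le> card S"
  proof -
    have "inj_on (\<lambda>q. q*M + c) {..<N div M}" unfolding inj_on_def using assms by simp
    moreover have "(\<lambda>q. q*M + c) ` {..<N div M} \<subseteq> S"
    proof
      fix x assume "x \<in> (\<lambda>q. q*M + c) ` {..<N div M}"
      then obtain q where q: "q < N div M" "x = q*M + c" by auto
      have "Suc q * M \<le> (N div M) * M" using q(1) by (intro mult_le_mono1) simp
      also have "\<dots> \<le> N" by simp
      finally have "x < N" using q(2) assms by simp
      then show "x \<in> S" unfolding S_def using q(2) assms by simp
    qed
    moreover have "finite S" unfolding S_def by simp
    ultimately have "card {..<N div M} \<le> card S" by (meson card_inj_on_le)
    then show ?thesis by simp
  qed
  have r: "real N / real M = real (N div M) + real (N mod M) / real M" by (rule of_nat_of_nat_div_aux)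
  have r1: "real (N mod M) / real M < 1" using assms by simp
  have r0: "real (N mod M) / real M \<ge> 0" by simp
  have "real (card S) \<le> real (N div M) + 1" using up by linarith
  moreover have "real (N div M) \<le> real (card S)" using lo by linarith
  ultimately show ?thesis unfolding S_def[symmetric] using r r1 r0 by linarith
qed

lemma lin_lim:
  fixes f :: "nat \<Rightarrow> real"
  assumes "\<And>N. \<bar>f N - real N * d\<bar> \<le> B"
  shows "(\<lambda>N. f N / real N) \<longlonglongrightarrow> d"
proof (rule tendsto_sandwich[where f = "\<lambda>N. d - B / real N" and h = "\<lambda>N. d + B / real N"])
  show "\<forall>\<^sub>F N in sequentially. d - B / real N \<le> f N / real N"
    using eventually_gt_at_top[of 0]
  proof eventually_elim
    case (elim N)
    have "real N * d - B \<le> f N" using assms[of N] by linarith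
    then have "(real N * d - B) / real N \<le> f N / real N" by (rule divide_right_mono) simp
    moreover have "(real N * d - B) / real N = d - B / real N" using elim by (simp add: field_simps)
    ultimately show ?case by simp
  qed
  show "\<forall>\<^sub>F N in sequentially. f N / real N \<le> d + B / real N"
    using eventually_gt_at_top[of 0]
  proof eventually_elim
    case (elim N)
    have "f N \<le> real N * d + B" using assms[of N] by linarith
    then have "f N / real N \<le> (real N * d + B) / real N" by (rule divide_right_mono) simp
    moreover have "(real N * d + B) / real N = d + B / real N" using elim by (simp add: field_simps)
    ultimately show ?case by simp
  qed
  show "(\<lambda>N. d - B / real N) \<longlonglongrightarrow> d" by real_asymp
  show "(\<lambda>N. d + B / real N) \<longlonglongrightarrow> d" by real_asymp
qed

lemma ratio_lim:
  assumes "\<And>N. \<bar>real (card {n. n<N \<and> odd n \<and> P n}) - real N * d\<bar> \<le> B"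
  shows "odd_ratio P \<longlonglongrightarrow> 2*d"
proof -
  have D: "\<bar>real (card {n. n<N \<and> odd n}) - real N * (1/2)\<bar> \<le> 1" for N
  proof -
    have "{n. n<N \<and> odd n} = {n. n<N \<and> n mod 2 = 1}" by (auto simp: odd_iff_mod_2_eq_one)
    then show ?thesis using count_class[of 2 1 N] by simp
  qed
  have lA: "(\<lambda>N. real (card {n. n<N \<and> odd n \<and> P n}) / real N) \<longlonglongrightarrow> d" by (rule lin_lim[OF assms])
  have lD: "(\<lambda>N. real (card {n. n<N \<and> odd n}) / real N) \<longlonglongrightarrow> 1/2" by (rule lin_lim[OF D])
  have "(\<lambda>N. (real (card {n. n<N \<and> odd n \<and> P n}) / real N) / (real (card {n. n<N \<and> odd n}) / real N))
      \<longlonglongrightarrow> d / (1/2)" by (rule tendsto_divide[OF lA lD]) simp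
  moreover have e: "d / (1/2) = 2 * d" by simp
  ultimately have l: "(\<lambda>N. (real (card {n. n<N \<and> odd n \<and> P n}) / real N) / (real (card {n. n<N \<and> odd n}) / real N))
      \<longlonglongrightarrow> 2*d" by (simp only:)
  show ?thesis
  proof (rule Lim_transform_eventually[OF l])
    show "\<forall>\<^sub>F N in sequentially. real (card {n. n<N \<and> odd n \<and> P n}) / real N / (real (card {n. n<N \<and> odd n}) / real N) = odd_ratio P N"
      using eventually_gt_at_top[of 0] by eventually_elim (simp add: odd_ratio_def)
  qed
qed

definition cnd :: "nat \<Rightarrow> nat \<Rightarrow> nat \<Rightarrow> bool" where
  "cnd j e n \<longleftrightarrow> (3^j*(n+1)) mod 2^Suc e = 2^j + 2^e"

lemma cnd_odd:
  assumes "1 \<le> j" "j < e" "cnd j e n"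
  shows "odd n"
proof -
  have "v2 (n+1) = j" using class_iff[OF assms(1,2), of n] assms(3) unfolding cnd_def by simp
  then have "2^j dvd n+1" using v2_dvd by metis
  moreover have "2 dvd (2::nat)^j" using assms(1) by (simp add: dvd_power)
  ultimately have "2 dvd n+1" using dvd_trans by blast
  then show ?thesis by simp
qed

lemma cnd_char:
  assumes "1 \<le> j" "j < e" "odd n"
  shows "Xc n = real j * log 2 3 - real e \<longleftrightarrow> cnd j e n"
proof -
  have X: "Xc n = real (Jf n) * log 2 3 - real (Ef n)" using Xc_eq[OF assms(3)] by simp
  have "Xc n = real j * log 2 3 - real e \<longleftrightarrow> Jf n = j \<and> Ef n = e"
    unfolding X using g_inj by blast
  also have "\<dots> \<longleftrightarrow> v2 (n+1) = j \<and> v2 (3^j*(n+1) - 2^j) = e"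
    unfolding Ef_def Jf_def by auto
  also have "\<dots> \<longleftrightarrow> cnd j e n" unfolding cnd_def by (rule class_iff[OF assms(1,2)])
  finally show ?thesis .
qed

definition gg :: "nat \<Rightarrow> nat \<Rightarrow> real" where
  "gg k l = real (k+1) * log 2 3 - real (k+l+2)"

lemma density_V:
  "odd_ratio (\<lambda>n. Xc n = gg k l) \<longlonglongrightarrow> (1/2)^(k+l+2)"
proof -
  define j e where "j = k+1" and "e = k+l+2"
  have je: "1 \<le> j" "j < e" unfolding j_def e_def by auto
  obtain c where c: "cnd j e c" using class_exists[OF je] unfolding cnd_def by blast
  define M :: nat where "M = 2^Suc e"
  have S: "{n. n<N \<and> odd n \<and> Xc n = gg k l} = {n. n<N \<and> n mod M = c mod M}" for N
  proof -
    have "odd n \<and> Xc n = gg k l \<longleftrightarrow> cnd j e n" for n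
      using cnd_char[OF je, of n] cnd_odd[OF je, of n] unfolding gg_def j_def e_def by auto
    moreover have "cnd j e n \<longleftrightarrow> n mod M = c mod M" for n
      unfolding M_def cnd_def using class_residue c unfolding cnd_def by blast
    ultimately show ?thesis by auto
  qed
  have M0: "0 < M" unfolding M_def by simp
  have "\<bar>real (card {n. n<N \<and> odd n \<and> Xc n = gg k l}) - real N * (1 / real M)\<bar> \<le> 1" for N
    unfolding S using count_class[OF M0, of "c mod M" N] M0 by simp
  then have L: "odd_ratio (\<lambda>n. Xc n = gg k l) \<longlonglongrightarrow> 2 * (1 / real M)" by (rule ratio_lim)
  have eq: "2 * (1 / real M) = (1/2)^(k+l+2)" unfolding M_def e_def by (simp add: power_one_over)
  show ?thesis using L unfolding eq .
qed

lemma density_notV: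
  assumes "x \<notin> Xc ` {n. odd n}"
  shows "odd_ratio (\<lambda>n. Xc n = x) \<longlonglongrightarrow> 0"
proof -
  have "{n. n<N \<and> odd n \<and> Xc n = x} = {}" for N using assms by auto
  then have "odd_ratio (\<lambda>n. Xc n = x) = (\<lambda>N. 0)" unfolding odd_ratio_def by (intro ext) simp
  then show ?thesis by simp
qed

lemma V_eq: "Xc ` {n. odd n} = range (\<lambda>(k,l). gg k l)"
proof
  show "Xc ` {n. odd n} \<subseteq> range (\<lambda>(k,l). gg k l)"
  proof
    fix x assume "x \<in> Xc ` {n. odd n}"
    then obtain n where n: "odd n" "x = Xc n" by auto
    have h: "Xc n = real (Jf n) * log 2 3 - real (Ef n)" "1 \<le> Jf n" "Jf n < Ef n" using Xc_eq[OF n(1)] by auto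
    have "gg (Jf n - 1) (Ef n - Jf n - 1) = Xc n" unfolding gg_def h(1) using h(2,3)
      by (simp add: of_nat_diff)
    then show "x \<in> range (\<lambda>(k,l). gg k l)" using n(2) by (metis (no_types, lifting) case_prod_conv rangeI)
  qed
  show "range (\<lambda>(k,l). gg k l) \<subseteq> Xc ` {n. odd n}"
  proof clarify
    fix k l :: nat
    define j e where "j = k+1" and "e = k+l+2"
    have je: "1 \<le> j" "j < e" unfolding j_def e_def by auto
    obtain c where c: "cnd j e c" using class_exists[OF je] unfolding cnd_def by blast
    have oc: "odd c" by (rule cnd_odd[OF je c])
    have "Xc c = gg k l" using cnd_char[OF je oc] c unfolding gg_def j_def e_def by simp
    then show "gg k l \<in> Xc ` {n. odd n}" using oc by (metis imageI mem_Collect_eq)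
  qed
qed

lemma gg_inj: "inj (\<lambda>(k,l). gg k l)"
proof (rule injI, clarify)
  fix a b c d assume "gg a b = gg c d"
  then have "a+1 = c+1 \<and> a+b+2 = c+d+2" unfolding gg_def by (rule g_inj)
  then show "a = c \<and> b = d" by simp
qed


lemma has_sum_lin:
  fixes f g :: "'a \<Rightarrow> real"
  assumes "(f has_sum a) A" "(g has_sum b) A"
  shows "((\<lambda>x. c * f x + d * g x) has_sum (c*a + d*b)) A"
  by (intro has_sum_add has_sum_cmult_right assms)

lemma geo_hs:
  fixes q :: real
  assumes "0 \<le> q" "q < 1"
  shows "((\<lambda>k. q^(k+1)) has_sum (q / (1 - q))) UNIV"
proof -
  have "(\<lambda>k. q^k) sums (1 / (1 - q))" using assms by (intro geometric_sums) simp
  then have "(\<lambda>k. q * q^k) sums (q * (1 / (1 - q)))" by (rule sums_mult)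
  then have "(\<lambda>k. q^(k+1)) sums (q / (1 - q))" by simp
  then show ?thesis using assms by (intro sums_nonneg_imp_has_sum) auto
qed

lemma u0_hs: "((\<lambda>k. (1/2::real)^(k+1)) has_sum 1) UNIV"
  using geo_hs[of "1/2"] by simp

lemma P_hs: "((\<lambda>k. real (k+1) * (1/2::real)^(k+1)) has_sum 2) UNIV"
proof -
  define G where "G k = (real k + 2) * (1/2::real)^k" for k
  have "G \<longlonglongrightarrow> 0" unfolding G_def by real_asymp
  then have "(\<lambda>n. G n - G (Suc n)) sums (G 0 - 0)" by (rule telescope_sums')
  moreover have "G n - G (Suc n) = real (n+1) * (1/2::real)^(n+1)" for n
    unfolding G_def by (simp add: field_simps)
  ultimately have "(\<lambda>k. real (k+1) * (1/2::real)^(k+1)) sums (G 0 - 0)" by simp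
  moreover have "G 0 = 2" unfolding G_def by simp
  ultimately have "(\<lambda>k. real (k+1) * (1/2::real)^(k+1)) sums 2" by simp
  then show ?thesis by (intro sums_nonneg_imp_has_sum) auto
qed

lemma U_hs: "((\<lambda>k. (real k - 1)^2 * (1/2::real)^(k+1)) has_sum 2) UNIV"
proof -
  define G where "G k = (real k ^ 2 + 2) * (1/2::real)^k" for k
  have "G \<longlonglongrightarrow> 0" unfolding G_def by real_asymp
  then have "(\<lambda>n. G n - G (Suc n)) sums (G 0 - 0)" by (rule telescope_sums')
  moreover have "G n - G (Suc n) = (real n - 1)^2 * (1/2::real)^(n+1)" for n
    unfolding G_def by (simp add: field_simps power2_eq_square)
  ultimately have "(\<lambda>k. (real k - 1)^2 * (1/2::real)^(k+1)) sums (G 0 - 0)" by simp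
  moreover have "G 0 = 2" unfolding G_def by simp
  ultimately have "(\<lambda>k. (real k - 1)^2 * (1/2::real)^(k+1)) sums 2" by simp
  then show ?thesis by (intro sums_nonneg_imp_has_sum) auto
qed

lemma prod_hs:
  fixes u v :: "nat \<Rightarrow> real"
  assumes "(u has_sum U) UNIV" "(v has_sum W) UNIV" "\<And>k. u k \<ge> 0" "\<And>l. v l \<ge> 0"
  shows "((\<lambda>(k,l). u k * v l) has_sum (U * W)) UNIV"
proof -
  have "((\<lambda>(k,l). u k * v l) has_sum (U * W)) (Sigma UNIV (\<lambda>_. UNIV))"
  proof (rule has_sum_SigmaI)
    show "((\<lambda>l. case (k, l) of (k, l) \<Rightarrow> u k * v l) has_sum u k * W) UNIV" for k
      using has_sum_cmult_right[OF assms(2), of "u k"] by simp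
    show "((\<lambda>k. u k * W) has_sum U * W) UNIV" by (rule has_sum_cmult_left[OF assms(1)])
    show "(\<lambda>(k, l). u k * v l) summable_on Sigma UNIV (\<lambda>_. UNIV)"
    proof (rule summable_on_SigmaI)
      show "((\<lambda>l. case (k, l) of (k, l) \<Rightarrow> u k * v l) has_sum u k * W) UNIV" for k
        using has_sum_cmult_right[OF assms(2), of "u k"] by simp
      show "(\<lambda>k. u k * W) summable_on UNIV" using has_sum_cmult_left[OF assms(1)] summable_on_def by blast
      show "0 \<le> (case (k, l) of (k, l) \<Rightarrow> u k * v l)" for k l using assms(3,4) by simp
    qed
  qed
  then show ?thesis by simp
qed

lemma hs_transfer:
  assumes "(f has_sum a) A" "a = b" "\<And>x. x \<in> A \<Longrightarrow> f x = g x"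
  shows "(g has_sum b) A"
  using assms has_sum_cong by metis

lemma p_gg: "lim (odd_ratio (\<lambda>n. Xc n = gg k l)) = (1/2::real)^(k+1) * (1/2)^(l+1)"
proof -
  have "lim (odd_ratio (\<lambda>n. Xc n = gg k l)) = (1/2::real)^(k+l+2)" by (rule limI[OF density_V])
  also have "\<dots> = (1/2::real)^(k+1) * (1/2)^(l+1)" by (simp add: power_add[symmetric])
  finally show ?thesis .
qed

lemma a_gt1: "log 2 3 > (1::real)"
  by (simp add: less_log_iff)

lemma mgf_part:
  fixes t :: real
  assumes t1: "- ln 2 < t" and t2: "t < ln 2 / (log 2 3 - 1)"
  shows "((\<lambda>(k,l). (1/2::real)^(k+1) * (1/2)^(l+1) * exp (t * gg k l)) has_sum
            (exp (t * (log 2 3 - 2)) /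
              (4 * (1 - exp (t * (log 2 3 - 1)) / 2) * (1 - exp (- t) / 2)))) UNIV"
proof -
  define a where "a = log 2 3"
  define E1 E2 where "E1 = exp (t * (a - 1))" and "E2 = exp (- t)"
  have a1: "a - 1 > 0" unfolding a_def using a_gt1 by simp
  have "t * (a - 1) < ln 2" using t2 a1 unfolding a_def[symmetric] by (simp add: pos_less_divide_eq)
  then have E1l: "E1 < 2" unfolding E1_def by (metis exp_less_cancel_iff exp_ln zero_less_numeral)
  have "- t < ln 2" using t1 by simp
  then have E2l: "E2 < 2" unfolding E2_def by (metis exp_less_cancel_iff exp_ln zero_less_numeral)
  have E10: "E1 > 0" "E2 > 0" unfolding E1_def E2_def by auto
  have h1: "((\<lambda>k. (E1/2)^(k+1)) has_sum ((E1/2) / (1 - E1/2))) UNIV" using E1l E10 by (intro geo_hs) auto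
  have h2: "((\<lambda>k. (E2/2)^(k+1)) has_sum ((E2/2) / (1 - E2/2))) UNIV" using E2l E10 by (intro geo_hs) auto
  have hp: "((\<lambda>(k,l). (E1/2)^(k+1) * (E2/2)^(l+1)) has_sum ((E1/2) / (1 - E1/2) * ((E2/2) / (1 - E2/2)))) UNIV"
    by (rule prod_hs[OF h1 h2]) (use E10 in auto)
  show ?thesis
  proof (rule hs_transfer[OF hp])
    have ex: "exp (t * (a - 2)) = E1 * E2" unfolding E1_def E2_def by (simp add: exp_add[symmetric] algebra_simps)
    have d4: "4 * (1 - E1/2) * (1 - E2/2) = (2 - E1) * (2 - E2)" by (simp add: algebra_simps)
    have q1: "(E1/2) / (1 - E1/2) = E1 / (2 - E1)" using E1l by (simp add: field_simps)
    have q2: "(E2/2) / (1 - E2/2) = E2 / (2 - E2)" using E2l by (simp add: field_simps)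
    show "(E1/2) / (1 - E1/2) * ((E2/2) / (1 - E2/2)) = exp (t * (log 2 3 - 2)) /
              (4 * (1 - exp (t * (log 2 3 - 1)) / 2) * (1 - exp (- t) / 2))"
      unfolding a_def[symmetric] E1_def[symmetric] E2_def[symmetric] ex d4 q1 q2 by simp
  next
    fix x :: "nat \<times> nat"
    obtain k l where x: "x = (k,l)" by fastforce
    have "t * gg k l = real (k+1) * (t*(a-1)) + real (l+1) * (-t)" unfolding gg_def a_def by (simp add: algebra_simps)
    then have "exp (t * gg k l) = E1^(k+1) * E2^(l+1)" unfolding E1_def E2_def
      by (simp only: exp_add exp_of_nat_mult)
    then show "(case x of (k, l) \<Rightarrow> (E1 / 2) ^ (k + 1) * (E2 / 2) ^ (l + 1)) =
         (case x of (k, l) \<Rightarrow> (1 / 2) ^ (k + 1) * (1 / 2) ^ (l + 1) * exp (t * gg k l))"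
      unfolding x by (simp add: power_divide)
  qed
qed

lemma mean_alg:
  fixes K L H1 H2 a :: real
  shows "(a - 1) * ((K+1) * H1 * H2) + - 1 * (H1 * ((L+1) * H2)) = H1 * H2 * ((K+1) * a - (K+L+2))"
  by (simp add: algebra_simps)

lemma mean_part:
  "((\<lambda>(k,l). (1/2::real)^(k+1) * (1/2)^(l+1) * gg k l) has_sum (2 * log 2 3 - 4)) UNIV"
proof -
  define a where "a = log 2 3"
  have h1: "((\<lambda>(k,l). (real (k+1) * (1/2::real)^(k+1)) * (1/2)^(l+1)) has_sum (2 * 1)) UNIV"
    by (rule prod_hs[OF P_hs u0_hs]) auto
  have h2: "((\<lambda>(k,l). (1/2::real)^(k+1) * (real (l+1) * (1/2)^(l+1))) has_sum (1 * 2)) UNIV"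
    by (rule prod_hs[OF u0_hs P_hs]) auto
  show ?thesis
  proof (rule hs_transfer[OF has_sum_lin[OF h1 h2, of "a - 1" "-1"]])
    show "(a - 1) * (2 * 1) + - 1 * (1 * 2) = 2 * log 2 3 - 4" unfolding a_def by simp
  next
    fix x :: "nat \<times> nat"
    obtain k l where x: "x = (k,l)" by fastforce
    show "(a - 1) * (case x of (k, l) \<Rightarrow> real (k + 1) * (1 / 2) ^ (k + 1) * (1 / 2) ^ (l + 1)) +
         - 1 * (case x of (k, l) \<Rightarrow> (1 / 2) ^ (k + 1) * (real (l + 1) * (1 / 2) ^ (l + 1))) =
         (case x of (k, l) \<Rightarrow> (1 / 2) ^ (k + 1) * (1 / 2) ^ (l + 1) * gg k l)"
      unfolding x gg_def a_def using mean_alg[of "log 2 3" "real k" "(1/2)^(k+1)" "(1/2)^(l+1)" "real l"]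
      by (simp add: ac_simps)
  qed
qed

lemma var_alg:
  fixes K L H1 H2 a :: real
  shows "(a - 1)^2 * ((K - 1)^2 * H1 * H2) + 1 * (H1 * ((L - 1)^2 * H2)) +
     (-2 * (a - 1)) * ((1 * ((K+1) * H1 * ((L+1) * H2)) + -2 * ((K+1) * H1 * H2)) +
                     (-2 * (H1 * ((L+1) * H2)) + 4 * (H1 * H2)))
   = H1 * H2 * ((K+1) * a - (K+L+2) - (2 * a - 4))^2"
  by (simp add: algebra_simps power2_eq_square)

lemma var_part:
  "((\<lambda>(k,l). (1/2::real)^(k+1) * (1/2)^(l+1) * (gg k l - (2 * log 2 3 - 4))^2) has_sum
      (2 * ((log 2 3 - 1)^2 + 1))) UNIV"
proof -
  define a where "a = log 2 3"
  have PP: "((\<lambda>(k,l). (real (k+1) * (1/2::real)^(k+1)) * (real (l+1) * (1/2)^(l+1))) has_sum (2 * 2)) UNIV"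
    by (rule prod_hs[OF P_hs P_hs]) auto
  have Pu: "((\<lambda>(k,l). (real (k+1) * (1/2::real)^(k+1)) * (1/2)^(l+1)) has_sum (2 * 1)) UNIV"
    by (rule prod_hs[OF P_hs u0_hs]) auto
  have uP: "((\<lambda>(k,l). (1/2::real)^(k+1) * (real (l+1) * (1/2)^(l+1))) has_sum (1 * 2)) UNIV"
    by (rule prod_hs[OF u0_hs P_hs]) auto
  have uu: "((\<lambda>(k,l). (1/2::real)^(k+1) * (1/2)^(l+1)) has_sum (1 * 1)) UNIV"
    by (rule prod_hs[OF u0_hs u0_hs]) auto
  have Uu: "((\<lambda>(k,l). ((real k - 1)^2 * (1/2::real)^(k+1)) * (1/2)^(l+1)) has_sum (2 * 1)) UNIV"
    by (rule prod_hs[OF U_hs u0_hs]) auto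
  have uU: "((\<lambda>(k,l). (1/2::real)^(k+1) * ((real l - 1)^2 * (1/2)^(l+1))) has_sum (1 * 2)) UNIV"
    by (rule prod_hs[OF u0_hs U_hs]) auto
  note Cr = has_sum_add[OF has_sum_lin[OF PP Pu, of 1 "-2"] has_sum_lin[OF uP uu, of "-2" 4]]
  note V = has_sum_add[OF has_sum_lin[OF Uu uU, of "(a-1)^2" 1] has_sum_cmult_right[OF Cr, of "-2 * (a - 1)"]]
  show ?thesis
  proof (rule hs_transfer[OF V])
    show "(a - 1)\<^sup>2 * (2 * 1) + 1 * (1 * 2) + -2 * (a - 1) * (1 * (2 * 2) + -2 * (2 * 1) + (-2 * (1 * 2) + 4 * (1 * 1))) =
    2 * ((log 2 3 - 1)\<^sup>2 + 1)" unfolding a_def by simp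
  next
    fix x :: "nat \<times> nat"
    obtain k l where x: "x = (k,l)" by fastforce
    show "(a - 1)\<^sup>2 * (case x of (k, l) \<Rightarrow> (real k - 1)\<^sup>2 * (1 / 2) ^ (k + 1) * (1 / 2) ^ (l + 1)) +
         1 * (case x of (k, l) \<Rightarrow> (1 / 2) ^ (k + 1) * ((real l - 1)\<^sup>2 * (1 / 2) ^ (l + 1))) +
         -2 * (a - 1) *
         (1 * (case x of (k, l) \<Rightarrow> real (k + 1) * (1 / 2) ^ (k + 1) * (real (l + 1) * (1 / 2) ^ (l + 1))) +
          -2 * (case x of (k, l) \<Rightarrow> real (k + 1) * (1 / 2) ^ (k + 1) * (1 / 2) ^ (l + 1)) +
          (-2 * (case x of (k, l) \<Rightarrow> (1 / 2) ^ (k + 1) * (real (l + 1) * (1 / 2) ^ (l + 1))) +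
           4 * (case x of (k, l) \<Rightarrow> (1 / 2) ^ (k + 1) * (1 / 2) ^ (l + 1)))) =
         (case x of (k, l) \<Rightarrow> (1 / 2) ^ (k + 1) * (1 / 2) ^ (l + 1) * (gg k l - (2 * log 2 3 - 4))\<^sup>2)"
      unfolding x gg_def a_def using var_alg[of "log 2 3" "real k" "(1/2)^(k+1)" "(1/2)^(l+1)" "real l"]
      by (simp add: ac_simps)
  qed
qed

theorem mainTheorem14:
  defines "p \<equiv> (\<lambda>x. odd_density (\<lambda>n. Xc n = x))"
      and "V \<equiv> Xc ` {n. odd n}"
  shows "(\<forall>x. odd_ratio (\<lambda>n. Xc n = x) \<longlonglongrightarrow> p x)
    \<and> (\<forall>t::real. - ln 2 < t \<and> t < ln 2 / (log 2 3 - 1) \<longrightarrow>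
         ((\<lambda>x. p x * exp (t * x)) has_sum
            (exp (t * (log 2 3 - 2)) /
              (4 * (1 - exp (t * (log 2 3 - 1)) / 2) * (1 - exp (- t) / 2)))) V)
    \<and> ((\<lambda>x. p x * x) has_sum (2 * log 2 3 - 4)) V
    \<and> ((\<lambda>x. p x * (x - (2 * log 2 3 - 4))\<^sup>2) has_sum (2 * ((log 2 3 - 1)\<^sup>2 + 1))) V"
proof -
  have conv: "convergent (odd_ratio (\<lambda>n. Xc n = x))" for x
  proof (cases "x \<in> Xc ` {n. odd n}")
    case True
    then obtain k l where "x = gg k l" unfolding V_eq by auto
    then show ?thesis using density_V convergent_def by blast
  next
    case False
    then show ?thesis using density_notV convergent_def by blast
  qed
  have P1: "\<forall>x. odd_ratio (\<lambda>n. Xc n = x) \<longlonglongrightarrow> p x"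
    unfolding p_def odd_density_def using conv convergent_LIMSEQ_iff by blast
  have pg: "p (gg k l) = (1/2::real)^(k+1) * (1/2)^(l+1)" for k l
    unfolding p_def odd_density_def by (rule p_gg)
  have VV: "V = (\<lambda>(k,l). gg k l) ` UNIV" unfolding V_def V_eq by simp
  have tr: "(F has_sum S) V" if "((\<lambda>(k,l). (1/2::real)^(k+1) * (1/2)^(l+1) * G (gg k l)) has_sum S) UNIV"
    and "\<And>x. F x = p x * G x" for F G S
  proof -
    have "((F \<circ> (\<lambda>(k,l). gg k l)) has_sum S) UNIV"
    proof (rule hs_transfer[OF that(1) refl])
      fix x :: "nat \<times> nat"
      obtain k l where x: "x = (k,l)" by fastforce
      show "(case x of (k, l) \<Rightarrow> (1 / 2) ^ (k + 1) * (1 / 2) ^ (l + 1) * G (gg k l)) =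
         (F \<circ> (\<lambda>(k, l). gg k l)) x" unfolding x using that(2) pg by simp
    qed
    then show ?thesis unfolding VV using has_sum_reindex[OF gg_inj] by blast
  qed
  have P2: "\<forall>t::real. - ln 2 < t \<and> t < ln 2 / (log 2 3 - 1) \<longrightarrow>
         ((\<lambda>x. p x * exp (t * x)) has_sum
            (exp (t * (log 2 3 - 2)) /
              (4 * (1 - exp (t * (log 2 3 - 1)) / 2) * (1 - exp (- t) / 2)))) V"
  proof (intro allI impI)
    fix t :: real assume tt: "- ln 2 < t \<and> t < ln 2 / (log 2 3 - 1)"
    show "((\<lambda>x. p x * exp (t * x)) has_sum
            (exp (t * (log 2 3 - 2)) /
              (4 * (1 - exp (t * (log 2 3 - 1)) / 2) * (1 - exp (- t) / 2)))) V"
      by (rule tr[where G = "\<lambda>x. exp (t * x)", OF mgf_part[of t]]) (use tt in auto)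
  qed
  have P3: "((\<lambda>x. p x * x) has_sum (2 * log 2 3 - 4)) V"
    by (rule tr[where G = "\<lambda>x. x", OF mean_part]) simp
  have P4: "((\<lambda>x. p x * (x - (2 * log 2 3 - 4))\<^sup>2) has_sum (2 * ((log 2 3 - 1)\<^sup>2 + 1))) V"
    by (rule tr[where G = "\<lambda>x. (x - (2 * log 2 3 - 4))\<^sup>2", OF var_part]) simp
  show ?thesis using P1 P2 P3 P4 by blast
qed

end
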